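(* Let $L\subset\mathbb{C}$ be a nonempty closed set without isolated points. Then the set of continuous functions $u:L\to\mathbb{C}$ for which there exist no $z_0\in L$, $r>0$ and holomorphic $F:D(z_0,r)\to\mathbb{C}$ with $F=u$ on $D(z_0,r)\cap L$ is a dense $G_\delta$ subset of $C(L)$.
   Context: $C(L)$ is the space of continuous functions $L\to\mathbb{C}$ with the topology of uniform convergence on compact subsets of $L$ (for compact $L$, the sup-norm topology). $D(z_0,r)$ is the open disk of center $z_0$ and radius $r$. *)

theory Defs
  imports "HOL-Analysis.Analysis"
begin

text \<open>Functions are
represented canonically as total functions complex \<Rightarrow> complex that vanish
outside L, so that each element of C(L) has exactly one representative.\<close>

definition CL :: "complex set \<Rightarrow> (complex \<Rightarrow> complex) set" where
  "CL L = {u. continuous_on L u \<and> (\<forall>z. z \<notin> L \<longrightarrow> u z = 0)}"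

definition cu_nbhd :: "complex set \<Rightarrow> (complex \<Rightarrow> complex) \<Rightarrow> complex set \<Rightarrow> real
    \<Rightarrow> (complex \<Rightarrow> complex) set" where
  "cu_nbhd L u K e = {v \<in> CL L. \<forall>z\<in>K. norm (v z - u z) < e}"

definition CL_top :: "complex set \<Rightarrow> (complex \<Rightarrow> complex) topology" where
  "CL_top L = topology (\<lambda>U. U \<subseteq> CL L \<and>
      (\<forall>u\<in>U. \<exists>K e. compact K \<and> K \<subseteq> L \<and> e > 0 \<and> cu_nbhd L u K e \<subseteq> U))"

end

theory Submission
  imports Defs "HOL-Complex_Analysis.Complex_Analysis"
begin


lemma CL_istop: "istopology (\<lambda>U. U \<subseteq> CL L \<and>
      (\<forall>u\<in>U. \<exists>K e. compact K \<and> K \<subseteq> L \<and> e > 0 \<and> cu_nbhd L u K e \<subseteq> U))"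
  unfolding istopology_def
proof (rule conjI; intro allI impI)
  fix S T assume S: "S \<subseteq> CL L \<and> (\<forall>u\<in>S. \<exists>K e. compact K \<and> K \<subseteq> L \<and> e > 0 \<and> cu_nbhd L u K e \<subseteq> S)"
    and T: "T \<subseteq> CL L \<and> (\<forall>u\<in>T. \<exists>K e. compact K \<and> K \<subseteq> L \<and> e > 0 \<and> cu_nbhd L u K e \<subseteq> T)"
  show "S \<inter> T \<subseteq> CL L \<and> (\<forall>u\<in>S \<inter> T. \<exists>K e. compact K \<and> K \<subseteq> L \<and> e > 0 \<and> cu_nbhd L u K e \<subseteq> S \<inter> T)"
  proof (intro conjI ballI)
    show "S \<inter> T \<subseteq> CL L" using S by blast
    fix u assume "u \<in> S \<inter> T"
    then obtain K1 e1 K2 e2 where 1: "compact K1" "K1 \<subseteq> L" "e1 > 0" "cu_nbhd L u K1 e1 \<subseteq> S"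
      and 2: "compact K2" "K2 \<subseteq> L" "e2 > 0" "cu_nbhd L u K2 e2 \<subseteq> T" using S T by blast
    have "cu_nbhd L u (K1 \<union> K2) (min e1 e2) \<subseteq> cu_nbhd L u K1 e1"
      "cu_nbhd L u (K1 \<union> K2) (min e1 e2) \<subseteq> cu_nbhd L u K2 e2"
      unfolding cu_nbhd_def by auto
    then have "cu_nbhd L u (K1 \<union> K2) (min e1 e2) \<subseteq> S \<inter> T"
      using 1(4) 2(4) by blast
    moreover have "compact (K1 \<union> K2)" "K1 \<union> K2 \<subseteq> L" "min e1 e2 > 0" using 1 2 by auto
    ultimately show "\<exists>K e. compact K \<and> K \<subseteq> L \<and> e > 0 \<and> cu_nbhd L u K e \<subseteq> S \<inter> T"
      by blast
  qed
next
  fix K :: "(complex \<Rightarrow> complex) set set"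
  assume K: "\<forall>S\<in>K. S \<subseteq> CL L \<and> (\<forall>u\<in>S. \<exists>K e. compact K \<and> K \<subseteq> L \<and> e > 0 \<and> cu_nbhd L u K e \<subseteq> S)"
  show "\<Union> K \<subseteq> CL L \<and> (\<forall>u\<in>\<Union> K. \<exists>Ka e. compact Ka \<and> Ka \<subseteq> L \<and> e > 0 \<and> cu_nbhd L u Ka e \<subseteq> \<Union> K)"
  proof (intro conjI ballI)
    show "\<Union> K \<subseteq> CL L" using K by blast
    fix u assume "u \<in> \<Union> K"
    then obtain S where S: "S \<in> K" "u \<in> S" by blast
    then have "\<forall>u\<in>S. \<exists>K e. compact K \<and> K \<subseteq> L \<and> e > 0 \<and> cu_nbhd L u K e \<subseteq> S"
      using K by blast
    then obtain K0 e0 where "compact K0" "K0 \<subseteq> L" "e0 > 0" "cu_nbhd L u K0 e0 \<subseteq> S"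
      using S(2) by blast
    moreover have "S \<subseteq> \<Union> K" using S(1) by blast
    ultimately show "\<exists>Ka e. compact Ka \<and> Ka \<subseteq> L \<and> e > 0 \<and> cu_nbhd L u Ka e \<subseteq> \<Union> K"
      by blast
  qed
qed

lemma openin_CL: "openin (CL_top L) U \<longleftrightarrow> U \<subseteq> CL L \<and>
      (\<forall>u\<in>U. \<exists>K e. compact K \<and> K \<subseteq> L \<and> e > 0 \<and> cu_nbhd L u K e \<subseteq> U)"
  unfolding CL_top_def using CL_istop by simp

lemma nbhd_sub: "cu_nbhd L u K e \<subseteq> CL L"
  unfolding cu_nbhd_def by auto

lemma topspace_CL: "topspace (CL_top L) = CL L"
proof -
  have "openin (CL_top L) (CL L)"
    unfolding openin_CL
  proof (intro conjI ballI)
    fix u assume "u \<in> CL L"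
    show "\<exists>K e. compact K \<and> K \<subseteq> L \<and> e > 0 \<and> cu_nbhd L u K e \<subseteq> CL L"
      using nbhd_sub by (intro exI[of _ "{}"] exI[of _ 1]) auto
  qed auto
  moreover have "topspace (CL_top L) \<subseteq> CL L"
    unfolding topspace_def openin_CL by blast
  ultimately show ?thesis
    using openin_subset by blast
qed

lemma self_in_nbhd: "u \<in> CL L \<Longrightarrow> e > 0 \<Longrightarrow> u \<in> cu_nbhd L u K e"
  unfolding cu_nbhd_def by auto

lemma nbhd_open:
  assumes "u \<in> CL L" "compact K" "K \<subseteq> L" "e > 0"
  shows "openin (CL_top L) (cu_nbhd L u K e)"
  unfolding openin_CL
proof (intro conjI ballI)
  show "cu_nbhd L u K e \<subseteq> CL L" by (rule nbhd_sub)
  fix v assume v: "v \<in> cu_nbhd L u K e"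
  show "\<exists>K' e'. compact K' \<and> K' \<subseteq> L \<and> e' > 0 \<and> cu_nbhd L v K' e' \<subseteq> cu_nbhd L u K e"
  proof (cases "K = {}")
    case True
    then show ?thesis using assms
      by (intro exI[of _ K] exI[of _ e]) (auto simp: cu_nbhd_def)
  next
    case False
    have "continuous_on K (\<lambda>z. norm (v z - u z))"
    proof -
      have "continuous_on L v" "continuous_on L u" using v assms unfolding cu_nbhd_def CL_def by auto
      then have "continuous_on K v" "continuous_on K u" using assms(3) continuous_on_subset by blast+
      then show ?thesis by (intro continuous_intros)
    qed
    then obtain z0 where z0: "z0 \<in> K" "\<And>z. z \<in> K \<Longrightarrow> norm (v z - u z) \<le> norm (v z0 - u z0)"
      using continuous_attains_sup[OF assms(2) False] by blast
    have lt: "norm (v z0 - u z0) < e" using v z0 unfolding cu_nbhd_def by auto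
    have "cu_nbhd L v K (e - norm (v z0 - u z0)) \<subseteq> cu_nbhd L u K e"
    proof
      fix w assume w: "w \<in> cu_nbhd L v K (e - norm (v z0 - u z0))"
      have "norm (w z - u z) < e" if "z \<in> K" for z
      proof -
        have "norm (w z - u z) \<le> norm (w z - v z) + norm (v z - u z)"
          using norm_triangle_ineq[of "w z - v z" "v z - u z"] by simp
        moreover have "norm (w z - v z) < e - norm (v z0 - u z0)" using w that unfolding cu_nbhd_def by blast
        ultimately show ?thesis using z0(2)[OF that] by linarith
      qed
      moreover have "w \<in> CL L" using w unfolding cu_nbhd_def by blast
      ultimately show "w \<in> cu_nbhd L u K e" unfolding cu_nbhd_def by blast
    qed
    moreover have "e - norm (v z0 - u z0) > 0" using lt by simp
    ultimately show ?thesis using assms(2,3) by blast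
  qed
qed

lemma closure_CL:
  assumes "\<And>u K e. u \<in> CL L \<Longrightarrow> compact K \<Longrightarrow> K \<subseteq> L \<Longrightarrow> e > 0 \<Longrightarrow> \<exists>v\<in>S. v \<in> cu_nbhd L u K e"
  shows "(CL_top L) closure_of S = topspace (CL_top L)"
proof -
  have "u \<in> (CL_top L) closure_of S" if u: "u \<in> CL L" for u
  proof -
    have "\<exists>y\<in>S. y \<in> T" if uT: "u \<in> T" "openin (CL_top L) T" for T
    proof -
      have "\<forall>u\<in>T. \<exists>K e. compact K \<and> K \<subseteq> L \<and> e > 0 \<and> cu_nbhd L u K e \<subseteq> T"
        using uT(2) unfolding openin_CL by (rule conjunct2)
      then obtain K e where "compact K" "K \<subseteq> L" "e > 0" "cu_nbhd L u K e \<subseteq> T"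
        using uT(1) by blast
      moreover obtain v where "v \<in> S" "v \<in> cu_nbhd L u K e" using assms[OF u \<open>compact K\<close> \<open>K \<subseteq> L\<close> \<open>e > 0\<close>] by blast
      ultimately show ?thesis by blast
    qed
    then have "\<forall>T. u \<in> T \<and> openin (CL_top L) T \<longrightarrow> (\<exists>y\<in>S. y \<in> T)" by blast
    then show ?thesis unfolding closure_of_def topspace_CL mem_Collect_eq using u by (intro conjI)
  qed
  then have "topspace (CL_top L) \<subseteq> (CL_top L) closure_of S" unfolding topspace_CL by (rule subsetI)
  then show ?thesis using closure_of_subset_topspace by (rule subset_antisym[rotated])
qed

lemma dense_CL:
  assumes "(CL_top L) closure_of S = topspace (CL_top L)" "u \<in> CL L" "compact K" "K \<subseteq> L" "e > 0"
  shows "\<exists>v\<in>S. v \<in> cu_nbhd L u K e"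
proof -
  have "u \<in> (CL_top L) closure_of S" using assms(1,2) topspace_CL by metis
  then have "\<forall>T. u \<in> T \<and> openin (CL_top L) T \<longrightarrow> (\<exists>y\<in>S. y \<in> T)"
    unfolding closure_of_def mem_Collect_eq by (rule conjunct2)
  then show ?thesis using nbhd_open[OF assms(2-5)] self_in_nbhd[OF assms(2) assms(5)] by blast
qed



definition cnb :: "complex set \<Rightarrow> (complex \<Rightarrow> complex) \<Rightarrow> complex set \<Rightarrow> real \<Rightarrow> (complex \<Rightarrow> complex) set" where
  "cnb L u K e = {v \<in> CL L. \<forall>z\<in>K. norm (v z - u z) \<le> e}"

lemma nbhd_cnb: "cu_nbhd L u K e \<subseteq> cnb L u K e"
  unfolding cu_nbhd_def cnb_def by auto

lemma self_cnb: "u \<in> CL L \<Longrightarrow> e > 0 \<Longrightarrow> u \<in> cnb L u K e"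
  unfolding cnb_def by auto

lemma half_pow_small:
  assumes "(c::real) > 0" "e > 0"
  shows "\<exists>N. \<forall>n\<ge>N. e * (1/2)^n < c"
proof -
  obtain N where N: "(1/2::real)^N < c / e" using real_arch_pow_inv[of "c/e" "1/2"] assms by auto
  have "e * (1/2)^n < c" if "n \<ge> N" for n
  proof -
    have "(1/2::real)^n \<le> (1/2)^N" using that by (simp add: power_decreasing)
    then have "(1/2::real)^n < c / e" using N by linarith
    then show ?thesis using assms by (simp add: field_simps)
  qed
  then show ?thesis by blast
qed

lemma baire_step:
  assumes G: "openin (CL_top L) G"
    and dG: "\<And>u K e. u \<in> CL L \<Longrightarrow> compact K \<Longrightarrow> K \<subseteq> L \<Longrightarrow> e > 0 \<Longrightarrow> \<exists>v\<in>G. v \<in> cu_nbhd L u K e"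
    and L: "closed L"
    and u: "u \<in> CL L" "compact K" "K \<subseteq> L" "e > 0"
  shows "\<exists>u' K' e'. u' \<in> CL L \<and> compact K' \<and> K' \<subseteq> L \<and> e' > 0 \<and> K \<subseteq> K' \<and>
           L \<inter> cball 0 (real n) \<subseteq> K' \<and> e' \<le> e/2 \<and> cnb L u' K' e' \<subseteq> cu_nbhd L u K e \<inter> G"
proof -
  obtain u' where u': "u' \<in> G" "u' \<in> cu_nbhd L u K e" using dG[OF u] by blast
  have u'CL: "u' \<in> CL L" using u'(2) nbhd_sub by blast
  have "\<forall>u\<in>G. \<exists>K e. compact K \<and> K \<subseteq> L \<and> e > 0 \<and> cu_nbhd L u K e \<subseteq> G"
    using G unfolding openin_CL by (rule conjunct2)
  then obtain K1 e1 where K1: "compact K1" "K1 \<subseteq> L" "e1 > 0" "cu_nbhd L u' K1 e1 \<subseteq> G"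
    using u'(1) by blast
  have "\<forall>v\<in>cu_nbhd L u K e. \<exists>K0 e'. compact K0 \<and> K0 \<subseteq> L \<and> e' > 0 \<and> cu_nbhd L v K0 e' \<subseteq> cu_nbhd L u K e"
    using nbhd_open[OF u] unfolding openin_CL by (rule conjunct2)
  then obtain K2 e2 where K2: "compact K2" "K2 \<subseteq> L" "e2 > 0" "cu_nbhd L u' K2 e2 \<subseteq> cu_nbhd L u K e"
    using u'(2) by blast
  define K' where "K' = K \<union> K1 \<union> K2 \<union> (L \<inter> cball 0 (real n))"
  define e' where "e' = min (min e1 e2) e / 2"
  have cK': "compact K'" unfolding K'_def
    using u(2) K1(1) K2(1) closed_Int_compact[OF L compact_cball] by (intro compact_Un) auto
  have K'L: "K' \<subseteq> L" unfolding K'_def using u(3) K1(2) K2(2) by blast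
  have e'pos: "e' > 0" unfolding e'_def using u(4) K1(3) K2(3) by simp
  have e'le: "e' < e1" "e' < e2" "e' \<le> e/2" unfolding e'_def using u(4) K1(3) K2(3) by auto
  have sub1: "cnb L u' K' e' \<subseteq> cu_nbhd L u' K1 e1"
  proof
    fix v assume v: "v \<in> cnb L u' K' e'"
    have "norm (v z - u' z) < e1" if "z \<in> K1" for z
    proof -
      have "z \<in> K'" unfolding K'_def using that by blast
      then have "norm (v z - u' z) \<le> e'" using v unfolding cnb_def by blast
      then show ?thesis using e'le(1) by linarith
    qed
    moreover have "v \<in> CL L" using v unfolding cnb_def by blast
    ultimately show "v \<in> cu_nbhd L u' K1 e1" unfolding cu_nbhd_def by blast
  qed
  have sub2: "cnb L u' K' e' \<subseteq> cu_nbhd L u' K2 e2"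
  proof
    fix v assume v: "v \<in> cnb L u' K' e'"
    have "norm (v z - u' z) < e2" if "z \<in> K2" for z
    proof -
      have "z \<in> K'" unfolding K'_def using that by blast
      then have "norm (v z - u' z) \<le> e'" using v unfolding cnb_def by blast
      then show ?thesis using e'le(2) by linarith
    qed
    moreover have "v \<in> CL L" using v unfolding cnb_def by blast
    ultimately show "v \<in> cu_nbhd L u' K2 e2" unfolding cu_nbhd_def by blast
  qed
  have "cnb L u' K' e' \<subseteq> cu_nbhd L u K e \<inter> G" using sub1 sub2 K1(4) K2(4) by blast
  moreover have "K \<subseteq> K'" "L \<inter> cball 0 (real n) \<subseteq> K'" unfolding K'_def by blast+
  ultimately show ?thesis using u'CL cK' K'L e'pos e'le(3) by blast
qed

lemma baire:
  assumes L: "closed L"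
    and G: "\<And>n::nat. openin (CL_top L) (G n)"
    and dG: "\<And>n u K e. u \<in> CL L \<Longrightarrow> compact K \<Longrightarrow> K \<subseteq> L \<Longrightarrow> e > 0 \<Longrightarrow> \<exists>v\<in>G n. v \<in> cu_nbhd L u K e"
    and u: "u \<in> CL L" "compact K" "K \<subseteq> L" "e > 0"
  shows "\<exists>v. (\<forall>n. v \<in> G n) \<and> v \<in> cu_nbhd L u K e"
proof -
  define P where "P s \<longleftrightarrow> fst s \<in> CL L \<and> compact (fst (snd s)) \<and> fst (snd s) \<subseteq> L \<and> snd (snd s) > 0"
    for s :: "(complex \<Rightarrow> complex) \<times> complex set \<times> real"
  define Q where "Q n s s' \<longleftrightarrow> P s' \<and> fst (snd s) \<subseteq> fst (snd s') \<and> L \<inter> cball 0 (real n) \<subseteq> fst (snd s')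
      \<and> snd (snd s') \<le> snd (snd s) / 2
      \<and> cnb L (fst s') (fst (snd s')) (snd (snd s')) \<subseteq> cu_nbhd L (fst s) (fst (snd s)) (snd (snd s)) \<inter> G n"
    for n s s'
  have ex: "\<exists>s'. P s \<longrightarrow> Q n s s'" for n s
  proof (cases s)
    case (fields a b c)
    show ?thesis
    proof
      show "P s \<longrightarrow> Q n s (SOME s'. Q n s s')"
      proof
        assume "P s"
        then have "a \<in> CL L" "compact b" "b \<subseteq> L" "c > 0" unfolding P_def fields by auto
        from baire_step[OF G dG L this, of n]
        obtain u' K' e' where "u' \<in> CL L \<and> compact K' \<and> K' \<subseteq> L \<and> e' > 0 \<and> b \<subseteq> K' \<and>
           L \<inter> cball 0 (real n) \<subseteq> K' \<and> e' \<le> c/2 \<and> cnb L u' K' e' \<subseteq> cu_nbhd L a b c \<inter> G n"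
          by blast
        then have "Q n s (u', K', e')" unfolding Q_def P_def fields by simp
        then show "Q n s (SOME s'. Q n s s')" by (rule someI)
      qed
    qed
  qed
  define f where "f n s = (SOME s'. Q n s s')" for n s
  have f: "Q n s (f n s)" if "P s" for n s
  proof -
    from ex[of s n] that have "\<exists>s'. Q n s s'" by blast
    then show ?thesis unfolding f_def by (rule someI_ex)
  qed
  define s where "s = rec_nat (u, K, e) f"
  have s0: "s 0 = (u, K, e)" unfolding s_def by simp
  have sSuc: "s (Suc n) = f n (s n)" for n unfolding s_def by simp
  have sP: "P (s n)" for n
  proof (induction n)
    case 0 then show ?case unfolding s0 P_def using u by simp
  next
    case (Suc n) then show ?case unfolding sSuc using f Q_def by blast
  qed
  have sQ: "Q n (s n) (s (Suc n))" for n unfolding sSuc using f sP by blast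
  define U where "U n = fst (s n)" for n
  define KK where "KK n = fst (snd (s n))" for n
  define E where "E n = snd (snd (s n))" for n
  have UCL: "U n \<in> CL L" and cKK: "compact (KK n)" and KKL: "KK n \<subseteq> L" and Epos: "E n > 0" for n
    using sP[of n] unfolding P_def U_def KK_def E_def by auto
  have KKmono1: "KK n \<subseteq> KK (Suc n)" and KKball: "L \<inter> cball 0 (real n) \<subseteq> KK (Suc n)"
    and Ehalf: "E (Suc n) \<le> E n / 2"
    and cnbsub: "cnb L (U (Suc n)) (KK (Suc n)) (E (Suc n)) \<subseteq> cu_nbhd L (U n) (KK n) (E n) \<inter> G n" for n
    using sQ[of n] unfolding Q_def U_def KK_def E_def by auto
  have KKmono: "n \<le> m \<Longrightarrow> KK n \<subseteq> KK m" for n m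
    using lift_Suc_mono_le[of KK, OF KKmono1] by blast
  have cnbchain: "n \<le> m \<Longrightarrow> cnb L (U m) (KK m) (E m) \<subseteq> cnb L (U n) (KK n) (E n)" for n m
  proof -
    assume "n \<le> m"
    have "cnb L (U (Suc k)) (KK (Suc k)) (E (Suc k)) \<subseteq> cnb L (U k) (KK k) (E k)" for k
      using cnbsub[of k] nbhd_cnb[of L "U k" "KK k" "E k"] by blast
    then show ?thesis
      using lift_Suc_antimono_le[of "\<lambda>k. cnb L (U k) (KK k) (E k)"] \<open>n \<le> m\<close> by blast
  qed
  have Ebound: "E n \<le> e * (1/2)^n" for n
  proof (induction n)
    case 0 then show ?case using s0 unfolding E_def by simp
  next
    case (Suc n) then show ?case using Ehalf[of n] by simp
  qed
  have Udiff: "n \<le> m \<Longrightarrow> z \<in> KK n \<Longrightarrow> norm (U m z - U n z) \<le> E n" for n m z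
  proof -
    assume nm: "n \<le> m" and z: "z \<in> KK n"
    have "U m \<in> cnb L (U m) (KK m) (E m)" using self_cnb[OF UCL Epos] .
    then have "U m \<in> cnb L (U n) (KK n) (E n)" using cnbchain[OF nm] by blast
    then show ?thesis using z unfolding cnb_def by blast
  qed
  have inKK: "z \<in> L \<Longrightarrow> norm z \<le> real k \<Longrightarrow> z \<in> KK (Suc k)" for z k
    using KKball[of k] by auto
  have zKK: "z \<in> L \<Longrightarrow> z \<in> KK (Suc (nat \<lceil>norm z\<rceil>))" for z
    by (rule inKK) (auto intro: real_nat_ceiling_ge)
  have Eventually_small: "\<exists>N. \<forall>n\<ge>N. E n < c" if cpos: "c > 0" for c
  proof -
    obtain N where N: "\<forall>n\<ge>N. e * (1/2)^n < c" using half_pow_small[OF cpos u(4)] by blast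
    show ?thesis using N Ebound by (meson order_le_less_trans)
  qed
  have cauchy: "Cauchy (\<lambda>m. U m z)" if z: "z \<in> L" for z
  proof (rule CauchyI)
    fix c :: real assume c: "c > 0"
    obtain N where N: "\<forall>n\<ge>N. E n < c / 2" using Eventually_small[of "c/2"] c by auto
    define n0 where "n0 = max N (Suc (nat \<lceil>norm z\<rceil>))"
    have zn0: "z \<in> KK n0" using zKK[OF z] KKmono[of "Suc (nat \<lceil>norm z\<rceil>)" n0] unfolding n0_def by auto
    have En0: "E n0 < c / 2" using N unfolding n0_def by simp
    have "norm (U m z - U m' z) < c" if "m \<ge> n0" "m' \<ge> n0" for m m'
    proof -
      have "norm (U m z - U m' z) \<le> norm (U m z - U n0 z) + norm (U m' z - U n0 z)"
        using norm_triangle_ineq4[of "U m z - U n0 z" "U m' z - U n0 z"] by simp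
      also have "\<dots> \<le> E n0 + E n0" using Udiff[OF that(1) zn0] Udiff[OF that(2) zn0] by linarith
      finally show ?thesis using En0 by linarith
    qed
    then show "\<exists>M. \<forall>m\<ge>M. \<forall>n\<ge>M. norm (U m z - U n z) < c" by blast
  qed
  define v where "v z = (if z \<in> L then lim (\<lambda>m. U m z) else 0)" for z
  have vlim: "(\<lambda>m. U m z) \<longlonglongrightarrow> v z" if "z \<in> L" for z
    using cauchy[OF that] that unfolding v_def Cauchy_convergent_iff convergent_LIMSEQ_iff by simp
  have vclose: "norm (v z - U n z) \<le> E n" if z: "z \<in> KK n" for z n
  proof -
    have zL: "z \<in> L" using z KKL by blast
    have "(\<lambda>m. U m z - U n z) \<longlonglongrightarrow> v z - U n z" using vlim[OF zL] by (intro tendsto_intros)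
    moreover have "eventually (\<lambda>m. norm (U m z - U n z) \<le> E n) sequentially"
      by (rule eventually_sequentiallyI[of n]) (rule Udiff[OF _ z])
    ultimately show ?thesis using Lim_norm_ubound[OF trivial_limit_sequentially] by blast
  qed
  have vcont: "continuous_on L v"
    unfolding continuous_on_iff
  proof (intro ballI allI impI)
    fix x c assume x: "x \<in> L" and c: "(c::real) > 0"
    obtain N where N: "\<forall>n\<ge>N. E n < c / 3" using Eventually_small[of "c/3"] c by auto
    define m where "m = max N (Suc (nat \<lceil>norm x + 1\<rceil>))"
    have Em: "E m < c / 3" using N unfolding m_def by simp
    have "continuous_on L (U m)" using UCL[of m] unfolding CL_def by blast
    then obtain d where d: "d > 0" "\<And>y. y \<in> L \<Longrightarrow> dist y x < d \<Longrightarrow> dist (U m y) (U m x) < c / 3"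
      unfolding continuous_on_iff using x c by (metis zero_less_divide_iff zero_less_numeral)
    have inm: "y \<in> KK m" if yy: "y \<in> L" "norm y \<le> norm x + 1" for y
    proof -
      have "norm y \<le> real (nat \<lceil>norm x + 1\<rceil>)" using yy(2) real_nat_ceiling_ge[of "norm x + 1"] by linarith
      then have "y \<in> KK (Suc (nat \<lceil>norm x + 1\<rceil>))" by (rule inKK[OF yy(1)])
      then show ?thesis using KKmono[of "Suc (nat \<lceil>norm x + 1\<rceil>)" m] unfolding m_def by auto
    qed
    have "dist (v y) (v x) < c" if y: "y \<in> L" "dist y x < min d 1" for y
    proof -
      have "norm y \<le> norm x + 1" using y(2) norm_triangle_ineq2[of y x] by (simp add: dist_norm)
      then have ym: "y \<in> KK m" using inm y(1) by blast
      have xm: "x \<in> KK m" using inm x by simp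
      have "dist (v y) (v x) \<le> norm (v y - U m y) + norm (U m y - U m x) + norm (U m x - v x)"
        unfolding dist_norm using norm_triangle_ineq[of "v y - U m y" "U m y - U m x"]
          norm_triangle_ineq[of "v y - U m x" "U m x - v x"] by simp
      moreover have "norm (v y - U m y) \<le> E m" using vclose[OF ym] .
      moreover have "norm (U m x - v x) \<le> E m" using vclose[OF xm] by (simp add: norm_minus_commute)
      moreover have "norm (U m y - U m x) < c / 3" using d(2)[OF y(1)] y(2) by (simp add: dist_norm)
      ultimately show ?thesis using Em by linarith
    qed
    then show "\<exists>d>0. \<forall>y\<in>L. dist y x < d \<longrightarrow> dist (v y) (v x) < c"
      using d(1) by (intro exI[of _ "min d 1"]) auto
  qed
  have vCL: "v \<in> CL L" unfolding CL_def using vcont by (simp add: v_def)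
  have vcnb: "v \<in> cnb L (U n) (KK n) (E n)" for n
    unfolding cnb_def using vCL vclose by blast
  have "v \<in> cu_nbhd L (U n) (KK n) (E n) \<inter> G n" for n
    using vcnb[of "Suc n"] cnbsub[of n] by blast
  then have "v \<in> G n" "v \<in> cu_nbhd L (U 0) (KK 0) (E 0)" for n by blast+
  moreover have "U 0 = u" "KK 0 = K" "E 0 = e" unfolding U_def KK_def E_def s0 by simp_all
  ultimately show ?thesis by metis
qed



definition EE :: "complex set \<Rightarrow> complex \<Rightarrow> real \<Rightarrow> real \<Rightarrow> (complex \<Rightarrow> complex) set" where
  "EE L w r M = {u \<in> CL L. (\<exists>z\<in>L. z \<in> ball w r) \<and> (\<exists>F. F holomorphic_on ball w r \<and>
       (\<forall>z\<in>ball w r. norm (F z) \<le> M) \<and> (\<forall>z\<in>ball w r \<inter> L. F z = u z))}"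

lemma EE_open:
  assumes L: "closed L"
  shows "openin (CL_top L) (CL L - EE L w r M)"
  unfolding openin_CL
proof (intro conjI ballI)
  show "CL L - EE L w r M \<subseteq> CL L" by blast
  fix u assume u: "u \<in> CL L - EE L w r M"
  show "\<exists>K e. compact K \<and> K \<subseteq> L \<and> e > 0 \<and> cu_nbhd L u K e \<subseteq> CL L - EE L w r M"
  proof (rule ccontr)
    assume H: "\<not> ?thesis"
    show False
    proof (cases "\<exists>z\<in>L. z \<in> ball w r")
      case False
      then have "EE L w r M = {}" by (simp add: EE_def)
      then have "cu_nbhd L u {} 1 \<subseteq> CL L - EE L w r M" using nbhd_sub by simp
      moreover have "compact ({}::complex set)" "{} \<subseteq> L" "(1::real) > 0" by auto
      ultimately have "\<exists>K e. compact K \<and> K \<subseteq> L \<and> e > 0 \<and> cu_nbhd L u K e \<subseteq> CL L - EE L w r M"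
        by blast
      then show False using H by simp
    next
      case True
      note zL = True
      define Kn where "Kn n = L \<inter> cball w (r - inverse (real (Suc n)))" for n
      have cKn: "compact (Kn n)" for n unfolding Kn_def by (rule closed_Int_compact[OF L compact_cball])
      have KnL: "Kn n \<subseteq> L" for n unfolding Kn_def by blast
      have Knball: "Kn n \<subseteq> ball w r \<inter> L" for n
      proof
        fix z assume "z \<in> Kn n"
        then have "z \<in> L" "dist w z \<le> r - inverse (real (Suc n))" unfolding Kn_def by auto
        moreover have "inverse (real (Suc n)) > 0" by simp
        ultimately have "z \<in> L" "dist w z < r" by linarith+
        then show "z \<in> ball w r \<inter> L" by simp
      qed
      have ex: "\<exists>F. F holomorphic_on ball w r \<and> (\<forall>z\<in>ball w r. norm (F z) \<le> M) \<and>
                   (\<forall>z\<in>Kn n. norm (F z - u z) < inverse (real (Suc n)))" for n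
      proof -
        have pos: "inverse (real (Suc n)) > 0" by simp
        have "\<not> cu_nbhd L u (Kn n) (inverse (real (Suc n))) \<subseteq> CL L - EE L w r M"
          using H cKn[of n] KnL[of n] pos by blast
        then obtain v where v: "v \<in> cu_nbhd L u (Kn n) (inverse (real (Suc n)))" "v \<in> EE L w r M"
          using nbhd_sub by blast
        from v(2) obtain F where F: "F holomorphic_on ball w r" "\<forall>z\<in>ball w r. norm (F z) \<le> M"
          "\<forall>z\<in>ball w r \<inter> L. F z = v z" unfolding EE_def by blast
        have "\<forall>z\<in>Kn n. norm (F z - u z) < inverse (real (Suc n))"
        proof
          fix z assume z: "z \<in> Kn n"
          then have "F z = v z" using F(3) Knball by blast
          moreover have "norm (v z - u z) < inverse (real (Suc n))" using v(1) z unfolding cu_nbhd_def by blast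
          ultimately show "norm (F z - u z) < inverse (real (Suc n))" by simp
        qed
        then show ?thesis using F(1,2) by blast
      qed
      then have "\<forall>n. \<exists>F. F holomorphic_on ball w r \<and> (\<forall>z\<in>ball w r. norm (F z) \<le> M) \<and>
                   (\<forall>z\<in>Kn n. norm (F z - u z) < inverse (real (Suc n)))" by blast
      from choice[OF this] obtain Fs where Fs: "\<And>n. Fs n holomorphic_on ball w r"
        "\<And>n z. z \<in> ball w r \<Longrightarrow> norm (Fs n z) \<le> M"
        "\<And>n z. z \<in> Kn n \<Longrightarrow> norm (Fs n z - u z) < inverse (real (Suc n))"
        by blast
      obtain g rr where g: "g holomorphic_on ball w r" "strict_mono (rr :: nat \<Rightarrow> nat)"
          "\<And>x. x \<in> ball w r \<Longrightarrow> ((\<lambda>n. Fs (rr n) x) \<longlongrightarrow> g x) sequentially"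
      proof (rule Montel[of "ball w r" "range Fs" Fs])
        show "\<And>h. h \<in> range Fs \<Longrightarrow> h holomorphic_on ball w r" using Fs(1) by blast
        show "\<exists>B. \<forall>h\<in>range Fs. \<forall>z\<in>K. norm (h z) \<le> B" if "compact K" "K \<subseteq> ball w r" for K
          using Fs(2) that(2) by blast
      qed auto
      have gb: "\<forall>z\<in>ball w r. norm (g z) \<le> M"
      proof
        fix z assume z: "z \<in> ball w r"
        show "norm (g z) \<le> M"
          using Lim_norm_ubound[OF trivial_limit_sequentially g(3)[OF z]] Fs(2)[OF z] by simp
      qed
      have ga: "\<forall>z\<in>ball w r \<inter> L. g z = u z"
      proof
        fix z assume z: "z \<in> ball w r \<inter> L"
        have "dist w z < r" using z by simp
        then obtain N where N: "inverse (real (Suc N)) < r - dist w z"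
          using reals_Archimedean[of "r - dist w z"] by auto
        have "norm (Fs (rr n) z - u z) \<le> inverse (real (Suc n))" if n: "n \<ge> N" for n
        proof -
          have rn: "n \<le> rr n" using seq_suble[OF g(2)] .
          have i1: "inverse (real (Suc (rr n))) \<le> inverse (real (Suc n))"
            using rn by (simp add: field_simps)
          have i2: "inverse (real (Suc (rr n))) \<le> inverse (real (Suc N))"
            using rn n by (simp add: field_simps)
          have "dist w z \<le> r - inverse (real (Suc (rr n)))" using N i2 by linarith
          then have "z \<in> Kn (rr n)" unfolding Kn_def using z by simp
          then show ?thesis using Fs(3)[of z "rr n"] i1 by linarith
        qed
        then have ev: "eventually (\<lambda>n. norm (Fs (rr n) z - u z) \<le> inverse (real (Suc n))) sequentially"
          by (rule eventually_sequentiallyI)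
        have "(\<lambda>n. Fs (rr n) z - u z) \<longlonglongrightarrow> 0"
          by (rule Lim_null_comparison[OF ev LIMSEQ_inverse_real_of_nat])
        then have "(\<lambda>n. Fs (rr n) z) \<longlonglongrightarrow> u z" by (rule LIM_zero_cancel)
        moreover have "(\<lambda>n. Fs (rr n) z) \<longlonglongrightarrow> g z" using g(3) z by blast
        ultimately show "g z = u z" using LIMSEQ_unique by blast
      qed
      have "u \<in> EE L w r M" unfolding EE_def using u zL g(1) gb ga by blast
      then show False using u by blast
    qed
  qed
qed

lemma EE_dense:
  assumes L: "closed L" and lim: "\<forall>x\<in>L. x islimpt L"
    and u: "u \<in> CL L" "compact K" "K \<subseteq> L" "e > 0"
  shows "\<exists>v\<in>CL L - EE L w r M. v \<in> cu_nbhd L u K e"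
proof (cases "u \<in> EE L w r M")
  case False
  then show ?thesis using u self_in_nbhd[OF u(1) u(4)] by blast
next
  case True
  then obtain z1 F1 where z1: "z1 \<in> L" "z1 \<in> ball w r" and F1: "F1 holomorphic_on ball w r"
    "\<forall>z\<in>ball w r \<inter> L. F1 z = u z" unfolding EE_def by blast
  have z1lim: "z1 islimpt L" using lim z1(1) by blast
  obtain p where p: "p \<in> L" "p \<in> ball w r" "p \<noteq> z1"
    by (rule islimptE[OF z1lim z1(2) open_ball])
  define s where "s = min (dist z1 p / 2) (r - dist w z1)"
  have spos: "s > 0" unfolding s_def using p(3) z1(2) by simp
  define A where "A = L \<inter> cball z1 s"
  have clA: "closed A" unfolding A_def using L by (intro closed_Int closed_cball)
  have Ane: "A \<noteq> {}" unfolding A_def using z1(1) spos by auto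
  have pA: "p \<notin> A"
  proof
    assume "p \<in> A"
    then have "dist z1 p \<le> s" unfolding A_def by simp
    moreover have "s \<le> dist z1 p / 2" unfolding s_def by (rule min.cobounded1)
    moreover have "dist z1 p > 0" using p(3) by simp
    ultimately show False by linarith
  qed
  define v where "v z = (if z \<in> L then u z + of_real (e/2 * min 1 (infdist z A)) else 0)" for z
  have ucont: "continuous_on L u" using u(1) unfolding CL_def by blast
  have "continuous_on L (\<lambda>z. u z + of_real (e/2 * min 1 (infdist z A)))"
    by (intro continuous_intros ucont continuous_on_id)
  then have vcont: "continuous_on L v" by (rule continuous_on_eq) (simp add: v_def)
  have vCL: "v \<in> CL L" unfolding CL_def using vcont by (simp add: v_def)
  have vn: "v \<in> cu_nbhd L u K e"
  proof -
    have "norm (v z - u z) < e" if z: "z \<in> K" for z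
    proof -
      have zL: "z \<in> L" using z u(3) by blast
      have eqv: "v z - u z = of_real (e/2 * min 1 (infdist z A))" using zL by (simp add: v_def)
      have nn: "0 \<le> e/2 * min 1 (infdist z A)" using u(4) infdist_nonneg[of z A] by (intro mult_nonneg_nonneg) auto
      have "norm (v z - u z) = e/2 * min 1 (infdist z A)"
        unfolding eqv norm_of_real by (rule abs_of_nonneg[OF nn])
      also have "\<dots> \<le> e/2" using u(4) by simp
      finally show ?thesis using u(4) by linarith
    qed
    then show ?thesis unfolding cu_nbhd_def using vCL by blast
  qed
  have vE: "v \<notin> EE L w r M"
  proof
    assume "v \<in> EE L w r M"
    then obtain F2 where F2: "F2 holomorphic_on ball w r" "\<forall>z\<in>ball w r \<inter> L. F2 z = v z"
      unfolding EE_def by blast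
    define G where "G z = (F2 z - F1 z) / of_real (e/2)" for z
    have Gh: "G holomorphic_on ball w r" unfolding G_def using F1(1) F2(1) u(4)
      by (intro holomorphic_intros) auto
    have Geq: "G z = of_real (min 1 (infdist z A))" if "z \<in> ball w r \<inter> L" for z
    proof -
      have "F2 z - F1 z = of_real (e/2 * min 1 (infdist z A))"
        using F1(2) F2(2) that by (simp add: v_def)
      then show ?thesis unfolding G_def using u(4) by (simp add: field_simps)
    qed
    define U where "U = L \<inter> ball z1 s"
    have Usub: "U \<subseteq> ball w r"
    proof
      fix z assume "z \<in> U"
      then have "dist z1 z < s" unfolding U_def by simp
      moreover have "s \<le> r - dist w z1" unfolding s_def by simp
      moreover have "dist w z \<le> dist w z1 + dist z1 z" by (rule dist_triangle)
      ultimately show "z \<in> ball w r" by simp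
    qed
    have UA: "U \<subseteq> A" unfolding U_def A_def by auto
    have G0: "G z = 0" if "z \<in> U" for z
    proof -
      have "z \<in> ball w r \<inter> L" using that Usub unfolding U_def by blast
      then have "G z = of_real (min 1 (infdist z A))" by (rule Geq)
      moreover have "infdist z A = 0"
      proof -
        have "z \<in> A" using UA that by blast
        then show ?thesis by (rule infdist_zero)
      qed
      ultimately show ?thesis by simp
    qed
    have Ulim: "z1 islimpt U"
    proof (rule islimptI)
      fix T assume T: "z1 \<in> T" "open T"
      have T2: "z1 \<in> T \<inter> ball z1 s" "open (T \<inter> ball z1 s)" using T spos by auto
      obtain y where "y \<in> L" "y \<in> T \<inter> ball z1 s" "y \<noteq> z1"
        by (rule islimptE[OF z1lim T2])
      then show "\<exists>y\<in>U. y \<in> T \<and> y \<noteq> z1" unfolding U_def by blast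
    qed
    have "G p = 0"
      by (rule analytic_continuation[OF Gh open_ball connected_ball Usub z1(2) Ulim G0 p(2)])
    moreover have "G p = of_real (min 1 (infdist p A))" using Geq p(1,2) by blast
    moreover have "infdist p A > 0" by (rule infdist_pos_not_in_closed[OF clA Ane pA])
    ultimately show False by simp
  qed
  show ?thesis using vCL vE vn by blast
qed



theorem theorem6p4:
  fixes L :: "complex set"
  assumes "closed L" and "L \<noteq> {}" and "\<forall>x\<in>L. x islimpt L"
  defines "N \<equiv> {u \<in> CL L. \<not> (\<exists>z0\<in>L. \<exists>r>0. \<exists>F. F holomorphic_on ball z0 r \<and>
                   (\<forall>z\<in>ball z0 r \<inter> L. F z = u z))}"
  shows "gdelta_in (CL_top L) N \<and> (CL_top L) closure_of N = topspace (CL_top L)"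
proof -
  define I where "I = ((\<rat>::real set) \<times> (\<rat>::real set) \<times> (\<rat>::real set) \<times> (UNIV :: nat set))"
  define Gi where "Gi i = (case i of (a, b, c, m) \<Rightarrow> CL L - EE L (Complex a b) c (real m))" for i
  define GG where "GG = Gi ` I"
  have cI: "countable I" unfolding I_def by (intro countable_SIGMA countable_rat) auto
  have cGG: "countable GG" unfolding GG_def using cI by (rule countable_image)
  have I0: "(0, 0, 0, 0) \<in> I" unfolding I_def by simp
  have GGne: "GG \<noteq> {}" unfolding GG_def using I0 by blast
  have GGopen: "openin (CL_top L) S" if SG: "S \<in> GG" for S
  proof -
    obtain a b c m where "S = CL L - EE L (Complex a b) c (real m)"
      using SG unfolding GG_def Gi_def by auto
    then show ?thesis using EE_open[OF assms(1)] by simp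
  qed
  have GGdense: "\<exists>v\<in>S. v \<in> cu_nbhd L u K e"
    if SG: "S \<in> GG" "u \<in> CL L" "compact K" "K \<subseteq> L" "e > 0" for S u K e
  proof -
    obtain a b c m where "S = CL L - EE L (Complex a b) c (real m)"
      using SG(1) unfolding GG_def Gi_def by auto
    then show ?thesis using EE_dense[OF assms(1) assms(3) SG(2-5)] by simp
  qed
  have Nsub: "N \<subseteq> \<Inter> GG"
  proof
    fix u assume uN: "u \<in> N"
    then have uCL: "u \<in> CL L" unfolding N_def by blast
    have notE: "u \<notin> EE L w c M" for w c M
    proof
      assume "u \<in> EE L w c M"
      then obtain z F where z: "z \<in> L" "z \<in> ball w c" and F: "F holomorphic_on ball w c"
        "\<forall>z\<in>ball w c \<inter> L. F z = u z" unfolding EE_def by blast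
      define r where "r = c - dist w z"
      have rpos: "r > 0" unfolding r_def using z(2) by simp
      have sub: "ball z r \<subseteq> ball w c"
      proof
        fix y assume "y \<in> ball z r"
        then have "dist z y < r" by simp
        moreover have "dist w y \<le> dist w z + dist z y" by (rule dist_triangle)
        ultimately show "y \<in> ball w c" unfolding r_def by simp
      qed
      have "F holomorphic_on ball z r" using F(1) sub by (rule holomorphic_on_subset)
      moreover have "\<forall>y\<in>ball z r \<inter> L. F y = u y" using F(2) sub by blast
      ultimately have "\<exists>z0\<in>L. \<exists>r>0. \<exists>F. F holomorphic_on ball z0 r \<and> (\<forall>z\<in>ball z0 r \<inter> L. F z = u z)"
        using z(1) rpos by blast
      then show False using uN unfolding N_def by blast
    qed
    show "u \<in> \<Inter> GG" unfolding GG_def Gi_def using uCL notE by auto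
  qed
  have supN: "\<Inter> GG \<subseteq> N"
  proof
    fix u assume uG: "u \<in> \<Inter> GG"
    have uGi: "u \<notin> EE L (Complex a b) c (real m)" if "a \<in> \<rat>" "b \<in> \<rat>" "c \<in> \<rat>" for a b c m
    proof -
      have "(a, b, c, m) \<in> I" unfolding I_def using that by simp
      then have "Gi (a, b, c, m) \<in> GG" unfolding GG_def by blast
      then have "u \<in> Gi (a, b, c, m)" using uG by blast
      then show ?thesis unfolding Gi_def by simp
    qed
    have uCL: "u \<in> CL L"
    proof -
      have "Gi (0, 0, 0, 0) \<in> GG" unfolding GG_def using I0 by blast
      then have "u \<in> Gi (0, 0, 0, 0)" using uG by blast
      then show ?thesis unfolding Gi_def by simp
    qed
    have "\<not> (\<exists>z0\<in>L. \<exists>r>0. \<exists>F. F holomorphic_on ball z0 r \<and> (\<forall>z\<in>ball z0 r \<inter> L. F z = u z))"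
    proof
      assume "\<exists>z0\<in>L. \<exists>r>0. \<exists>F. F holomorphic_on ball z0 r \<and> (\<forall>z\<in>ball z0 r \<inter> L. F z = u z)"
      then obtain z0 r F where z0: "z0 \<in> L" and r: "r > 0" and F: "F holomorphic_on ball z0 r"
        "\<forall>z\<in>ball z0 r \<inter> L. F z = u z" by blast
      obtain a where a: "a \<in> \<rat>" "Re z0 - r/8 < a" "a < Re z0 + r/8"
        using Rats_dense_in_real[of "Re z0 - r/8" "Re z0 + r/8"] r by auto
      obtain b where b: "b \<in> \<rat>" "Im z0 - r/8 < b" "b < Im z0 + r/8"
        using Rats_dense_in_real[of "Im z0 - r/8" "Im z0 + r/8"] r by auto
      obtain c where c: "c \<in> \<rat>" "r/4 < c" "c < r/2"
        using Rats_dense_in_real[of "r/4" "r/2"] r by auto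
      define w where "w = Complex a b"
      have "dist w z0 \<le> \<bar>Re (w - z0)\<bar> + \<bar>Im (w - z0)\<bar>" unfolding dist_norm by (rule cmod_le)
      moreover have "Re (w - z0) = a - Re z0" "Im (w - z0) = b - Im z0" unfolding w_def by simp_all
      moreover have "\<bar>a - Re z0\<bar> < r/8" "\<bar>b - Im z0\<bar> < r/8" using a(2,3) b(2,3) by arith+
      ultimately have dwz: "dist w z0 < r/4" by linarith
      have csub: "cball z0 (3*r/4) \<subseteq> ball z0 r"
      proof
        fix y assume "y \<in> cball z0 (3*r/4)"
        then have "dist z0 y \<le> 3*r/4" by simp
        then show "y \<in> ball z0 r" using r by simp
      qed
      have "continuous_on (cball z0 (3*r/4)) F"
        using holomorphic_on_imp_continuous_on[OF F(1)] csub by (rule continuous_on_subset)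
      then have "bounded (F ` cball z0 (3*r/4))"
        by (intro compact_imp_bounded compact_continuous_image compact_cball)
      then obtain B where B: "\<forall>y\<in>F ` cball z0 (3*r/4). norm y \<le> B" unfolding bounded_iff by blast
      define m where "m = nat \<lceil>B\<rceil>"
      have Bm: "B \<le> real m" unfolding m_def by (rule real_nat_ceiling_ge)
      have bsub: "ball w c \<subseteq> cball z0 (3*r/4)"
      proof
        fix y assume "y \<in> ball w c"
        then have "dist w y < c" by simp
        moreover have "dist z0 y \<le> dist z0 w + dist w y" by (rule dist_triangle)
        moreover have "dist z0 w = dist w z0" by (rule dist_commute)
        ultimately show "y \<in> cball z0 (3*r/4)" using dwz c by simp
      qed
      have bsub2: "ball w c \<subseteq> ball z0 r" using bsub csub by blast
      have "u \<in> EE L w c (real m)"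
        unfolding EE_def
      proof (intro CollectI conjI)
        show "u \<in> CL L" by (rule uCL)
        have "z0 \<in> ball w c" using dwz c by simp
        then show "\<exists>z\<in>L. z \<in> ball w c" using z0 by blast
        have "F holomorphic_on ball w c" using F(1) bsub2 by (rule holomorphic_on_subset)
        moreover have "\<forall>z\<in>ball w c. norm (F z) \<le> real m" using B bsub Bm by fastforce
        moreover have "\<forall>z\<in>ball w c \<inter> L. F z = u z" using F(2) bsub2 by blast
        ultimately show "\<exists>F. F holomorphic_on ball w c \<and> (\<forall>z\<in>ball w c. norm (F z) \<le> real m)
            \<and> (\<forall>z\<in>ball w c \<inter> L. F z = u z)" by blast
      qed
      then show False using uGi[OF a(1) b(1) c(1), of m] unfolding w_def by blast
    qed
    then show "u \<in> N" unfolding N_def using uCL by blast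
  qed
  have Neq: "N = \<Inter> GG" using Nsub supN by (rule subset_antisym)
  have gd: "gdelta_in (CL_top L) N"
    unfolding Neq using cGG GGne by (intro gdelta_in_Inter open_imp_gdelta_in GGopen)
  have cl: "(CL_top L) closure_of N = topspace (CL_top L)"
  proof (rule closure_CL)
    fix u K e assume u: "u \<in> CL L" "compact K" "K \<subseteq> L" "(e::real) > 0"
    define Gs where "Gs n = from_nat_into GG n" for n
    have GsG: "Gs n \<in> GG" for n unfolding Gs_def using GGne by (rule from_nat_into)
    have rG: "range Gs = GG" unfolding Gs_def using GGne cGG by (rule range_from_nat_into)
    have Go: "openin (CL_top L) (Gs n)" for n by (rule GGopen[OF GsG])
    have Gd: "\<exists>v\<in>Gs n. v \<in> cu_nbhd L u' K' e'"
      if "u' \<in> CL L" "compact K'" "K' \<subseteq> L" "e' > 0" for n u' K' e'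
      by (rule GGdense[OF GsG that])
    obtain v where v: "\<forall>n. v \<in> Gs n" "v \<in> cu_nbhd L u K e"
      using baire[where G=Gs and u=u and K=K and e=e, OF assms(1) Go Gd u(1) u(2) u(3) u(4)] by blast
    have "v \<in> \<Inter> GG" using v(1) rG by blast
    then show "\<exists>v\<in>N. v \<in> cu_nbhd L u K e" using v(2) Neq by blast
  qed
  show ?thesis using gd cl by blast
qed


end
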